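(* Let $(\vec U_i)_{i\in\mathbb{Z}}$ be a strictly stationary sequence of $d$-dimensional random vectors with c.d.f. $C$ (a copula), whose strong mixing coefficients satisfy $\alpha_r=O(r^{-a})$ for some $a>3$. Let $\ell_n\to\infty$ be strictly positive constants with $\ell_n=O(n^{1/2-\varepsilon})$ for some $0<\varepsilon<1/2$, and let $\varphi:\mathbb{R}\to[0,1]$ be symmetric around $0$, with $\varphi(0)=1$, $\varphi(x)=0$ for $|x|>1$, twice continuously differentiable on $[-1,1]$ with $\varphi''(0)\neq0$. Define, for $\vec u,\vec v\in[0,1]^d$, $$\tilde\sigma_n(\vec u,\vec v)=\frac1n\sum_{i,j=1}^n\varphi\{(i-j)/\ell_n\}\{\mathbf 1(\vec U_i\le\vec u)-C(\vec u)\}\{\mathbf 1(\vec U_j\le\vec v)-C(\vec v)\}.$$ Then for all $\vec u,\vec v\in[0,1]^d$, $$\mathrm E\{\tilde\sigma_n(\vec u,\vec v)\}-\sigma_C(\vec u,\vec v)=\frac{\Gamma(\vec u,\vec v)}{\ell_n^2}+r_{n,1}(\vec u,\vec v),$$ where $\sup_{\vec u,\vec v\in[0,1]^d}|r_{n,1}(\vec u,\vec v)|=o(\ell_n^{-2})$ and $\Gamma(\vec u,\vec v)=\frac{\varphi''(0)}2\sum_{k=-\infty}^{\infty}k^2\gamma(k,\vec u,\vec v)$ with $\gamma(k,\vec u,\vec v)=\mathrm{Cov}\{\mathbf 1(\vec U_0\le\vec u),\mathbf 1(\vec U_k\le\vec v)\}$.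
   Context: Strong mixing coefficients: $\alpha_r=\sup_p\sup_{A\in\mathcal F_{-\infty}^p,B\in\mathcal F_{p+r}^\infty}|P(A\cap B)-P(A)P(B)|$, $\mathcal F_a^b=\sigma(\vec U_i:a\le i\le b)$. $\sigma_C(\vec u,\vec v)=\mathrm{Cov}\{\mathbb{B}_C(1,\vec u),\mathbb{B}_C(1,\vec v)\}$, where $\mathbb{B}_C$ is the weak limit in $\ell^\infty([0,1]^{d+1})$ of the sequential empirical process $\tilde{\mathbb{B}}_n(s,\vec u)=n^{-1/2}\sum_{i=1}^{\lfloor ns\rfloor}\{\mathbf 1(\vec U_i\le\vec u)-C(\vec u)\}$ (equivalently $\sigma_C(\vec u,\vec v)=\sum_{k\in\mathbb{Z}}\gamma(k,\vec u,\vec v)$). *)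

theory Defs
  imports "HOL-Probability.Probability" "HOL-Library.Landau_Symbols"
begin

definition ind_le :: "real^'d \<Rightarrow> real^'d \<Rightarrow> real" where
  "ind_le x u = (if (\<forall>j. x $ j \<le> u $ j) then 1 else 0)"

definition unit_cube :: "(real^'d) set" where
  "unit_cube = {u. \<forall>j. 0 \<le> u $ j \<and> u $ j \<le> 1}"

definition gen_sigma :: "'a measure \<Rightarrow> (int \<Rightarrow> 'a \<Rightarrow> real^'d) \<Rightarrow> int set \<Rightarrow> 'a set set" where
  "gen_sigma M U I = sigma_sets (space M) {U i -` B \<inter> space M | i B. i \<in> I \<and> B \<in> sets borel}"

definition alpha_mix :: "'a measure \<Rightarrow> (int \<Rightarrow> 'a \<Rightarrow> real^'d) \<Rightarrow> nat \<Rightarrow> real" where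
  "alpha_mix M U r = Sup {\<bar>measure M (A \<inter> B) - measure M A * measure M B\<bar> | p A B.
      A \<in> gen_sigma M U {..p} \<and> B \<in> gen_sigma M U {p + int r..}}"

definition strictly_stationary :: "'a measure \<Rightarrow> (int \<Rightarrow> 'a \<Rightarrow> real^'d) \<Rightarrow> bool" where
  "strictly_stationary M U \<longleftrightarrow> (\<forall>I h. finite I \<longrightarrow>
      distr M (PiM I (\<lambda>_. borel)) (\<lambda>\<omega>. \<lambda>i\<in>I. U i \<omega>)
    = distr M (PiM I (\<lambda>_. borel)) (\<lambda>\<omega>. \<lambda>i\<in>I. U (i + h) \<omega>))"

definition cov :: "'a measure \<Rightarrow> ('a \<Rightarrow> real) \<Rightarrow> ('a \<Rightarrow> real) \<Rightarrow> real" where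
  "cov M X Y = integral\<^sup>L M (\<lambda>\<omega>. (X \<omega> - integral\<^sup>L M X) * (Y \<omega> - integral\<^sup>L M Y))"

definition gamma_cov :: "'a measure \<Rightarrow> (int \<Rightarrow> 'a \<Rightarrow> real^'d) \<Rightarrow> int \<Rightarrow> real^'d \<Rightarrow> real^'d \<Rightarrow> real" where
  "gamma_cov M U k u v = cov M (\<lambda>\<omega>. ind_le (U 0 \<omega>) u) (\<lambda>\<omega>. ind_le (U k \<omega>) v)"

definition sigma_C :: "'a measure \<Rightarrow> (int \<Rightarrow> 'a \<Rightarrow> real^'d) \<Rightarrow> real^'d \<Rightarrow> real^'d \<Rightarrow> real" where
  "sigma_C M U u v = (\<Sum>\<^sub>\<infinity>k\<in>(UNIV::int set). gamma_cov M U k u v)"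

definition sigma_tilde :: "(real \<Rightarrow> real) \<Rightarrow> real \<Rightarrow> (real^'d \<Rightarrow> real) \<Rightarrow> (int \<Rightarrow> 'a \<Rightarrow> real^'d)
     \<Rightarrow> nat \<Rightarrow> real^'d \<Rightarrow> real^'d \<Rightarrow> 'a \<Rightarrow> real" where
  "sigma_tilde \<phi> l C U n u v \<omega> = (1 / real n) *
     (\<Sum>i\<in>{1..int n}. \<Sum>j\<in>{1..int n}. \<phi> (real_of_int (i - j) / l)
        * (ind_le (U i \<omega>) u - C u) * (ind_le (U j \<omega>) v - C v))"

end

theory Submission
  imports Defs
begin


lemma int_summable_from_nat:
  fixes h :: "nat \<Rightarrow> real"
  assumes "summable h" "\<And>n. h n \<ge> 0"
  shows "(\<lambda>k::int. h (nat \<bar>k\<bar>)) summable_on UNIV"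
proof -
  have hs: "h summable_on UNIV" using summable_nonneg_imp_summable_on assms by blast
  have 1: "(\<lambda>k::int. h (nat \<bar>k\<bar>)) summable_on (range int)"
    by (subst summable_on_reindex) (auto simp: o_def hs inj_on_def)
  have 2: "(\<lambda>k::int. h (nat \<bar>k\<bar>)) summable_on (range (\<lambda>n. - int n))"
    by (subst summable_on_reindex) (auto simp: o_def hs inj_on_def)
  have "UNIV = range int \<union> range (\<lambda>n. - int n)"
  proof (intro set_eqI iffI)
    fix x :: int
    show "x \<in> range int \<union> range (\<lambda>n. - int n)"
    proof (cases "x \<ge> 0")
      case True then show ?thesis by (auto intro!: image_eqI[of _ _ "nat x"])
    next
      case False then show ?thesis by (auto intro!: image_eqI[of _ _ "nat (-x)"])
    qed
  qed auto
  then show ?thesis using summable_on_union[OF 1 2] by simp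
qed

lemma inv_sq_sum_aux: "n \<ge> 1 \<Longrightarrow> (\<Sum>i\<in>{1..int n}. 1 / (real_of_int i)^2) \<le> 2 - 1 / real n"
proof (induction n rule: dec_induct)
  case base then show ?case by simp
next
  case (step n)
  have e: "{1..int (Suc n)} = insert (1 + int n) {1..int n}"
    using atLeastAtMostPlus1_int_conv[of 1 "int n"] by simp
  have "(\<Sum>i\<in>{1..int (Suc n)}. 1 / (real_of_int i)^2) = 1/(real n + 1)^2 + (\<Sum>i\<in>{1..int n}. 1 / (real_of_int i)^2)"
    unfolding e by (subst sum.insert) (auto simp: add.commute)
  also have "\<dots> \<le> 1/(real n + 1)^2 + (2 - 1/real n)" using step by simp
  also have "\<dots> \<le> 2 - 1 / real (Suc n)"
  proof -
    have "1/(real n + 1)^2 \<le> 1/real n - 1/(real n + 1)"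
    proof -
      have n0: "real n > 0" using step(1) by simp
      have "1/real n - 1/(real n + 1) = 1/(real n * (real n + 1))" using n0 by (simp add: field_simps)
      moreover have "1/(real n + 1)^2 \<le> 1/(real n * (real n + 1))"
        using n0 by (intro divide_left_mono) (auto simp: power2_eq_square)
      ultimately show ?thesis by simp
    qed
    moreover have "1 / real (Suc n) = 1 / (real n + 1)" by (simp add: add.commute)
    ultimately show ?thesis by linarith
  qed
  finally show ?case .
qed

lemma inv_sq_sum: "(\<Sum>i\<in>{1..int n}. 1 / (real_of_int i)^2) \<le> 2"
proof (cases "n \<ge> 1")
  case True then show ?thesis using inv_sq_sum_aux[OF True] by (smt (verit) divide_nonneg_nonneg of_nat_0_le_iff)
qed simp

lemma sum_reflect_int: "(\<Sum>i\<in>{1..int n}. f (int n + 1 - i)) = (\<Sum>i\<in>{1..int n}. f i)"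
  by (rule sum.reindex_bij_witness[of _ "\<lambda>i. int n + 1 - i" "\<lambda>i. int n + 1 - i"]) auto



lemma phi_taylor:
  fixes \<phi> \<phi>' \<phi>'' :: "real \<Rightarrow> real"
  assumes phi_sym: "\<And>x. \<phi> (- x) = \<phi> x"
    and phi0: "\<phi> 0 = 1"
    and phi_d1: "\<And>x. x \<in> {-1..1} \<Longrightarrow> (\<phi> has_real_derivative \<phi>' x) (at x within {-1..1})"
    and phi_d2: "\<And>x. x \<in> {-1..1} \<Longrightarrow> (\<phi>' has_real_derivative \<phi>'' x) (at x within {-1..1})"
    and phi_cont: "continuous_on {-1..1} \<phi>''"
    and \<delta>: "\<delta> > 0"
  shows "\<exists>\<eta>>0. \<forall>x. \<bar>x\<bar> < \<eta> \<longrightarrow> \<bar>\<phi> x - 1 - \<phi>'' 0 / 2 * x^2\<bar> \<le> \<delta> * x^2"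
proof -
  have int: "at x within {-1..1} = at x" if "\<bar>x\<bar> < 1" for x :: real
    using that by (intro at_within_interior) auto
  have D1: "(\<phi> has_real_derivative \<phi>' x) (at x)" if "\<bar>x\<bar> < 1" for x
  proof -
    have "x \<in> {-1..1}" using that by auto
    from phi_d1[OF this] show ?thesis by (simp add: int[OF that])
  qed
  have D2: "(\<phi>' has_real_derivative \<phi>'' x) (at x)" if "\<bar>x\<bar> < 1" for x
  proof -
    have "x \<in> {-1..1}" using that by auto
    from phi_d2[OF this] show ?thesis by (simp add: int[OF that])
  qed
  have "((\<lambda>x. \<phi> (- x)) has_real_derivative \<phi>' (- 0) * (- 1)) (at 0)"
    by (rule DERIV_chain2[OF D1]) (auto intro!: derivative_eq_intros)
  moreover have "(\<lambda>x. \<phi> (- x)) = \<phi>" using phi_sym by auto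
  ultimately have "(\<phi> has_real_derivative - \<phi>' 0) (at 0)" by simp
  with D1[of 0] have d10: "\<phi>' 0 = 0" using DERIV_unique by fastforce
  have "isCont \<phi>'' 0"
    using phi_cont by (rule continuous_on_interior) auto
  then obtain \<eta>0 where \<eta>0: "\<eta>0 > 0" "\<And>t. \<bar>t - 0\<bar> < \<eta>0 \<Longrightarrow> \<bar>\<phi>'' t - \<phi>'' 0\<bar> < 2 * \<delta>"
    using \<delta> unfolding continuous_at_eps_delta dist_real_def
    by (metis mult_pos_pos zero_less_numeral)
  define \<eta> where "\<eta> = min \<eta>0 1"
  have pos: "\<bar>\<phi> x - 1 - \<phi>'' 0 / 2 * x^2\<bar> \<le> \<delta> * x^2" if x: "0 < x" "x < \<eta>" for x
  proof -
    define diff where "diff = (\<lambda>m::nat. if m = 0 then \<phi> else if m = 1 then \<phi>' else \<phi>'')"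
    have "\<exists>t. 0 < t \<and> t < x \<and> \<phi> x = (\<Sum>m<2. diff m 0 / fact m * x ^ m) + diff 2 t / fact 2 * x ^ 2"
    proof (rule Maclaurin)
      show "\<forall>m t. m < 2 \<and> 0 \<le> t \<and> t \<le> x \<longrightarrow> DERIV (diff m) t :> diff (Suc m) t"
      proof (intro allI impI)
        fix m t assume a: "m < (2::nat) \<and> 0 \<le> t \<and> t \<le> x"
        then have t1: "\<bar>t\<bar> < 1" using x unfolding \<eta>_def by auto
        from a have "m = 0 \<or> m = 1" by auto
        then show "DERIV (diff m) t :> diff (Suc m) t"
          using D1[OF t1] D2[OF t1] by (auto simp: diff_def)
      qed
    qed (use x in \<open>auto simp: diff_def\<close>)
    then obtain t where t: "0 < t" "t < x" "\<phi> x = 1 + \<phi>'' t / 2 * x^2"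
      by (auto simp: diff_def numeral_2_eq_2 phi0 d10)
    have "\<bar>\<phi>'' t - \<phi>'' 0\<bar> < 2 * \<delta>" using \<eta>0(2)[of t] t x unfolding \<eta>_def by auto
    then have "\<bar>\<phi>'' t / 2 - \<phi>'' 0 / 2\<bar> \<le> \<delta>" by linarith
    then have "\<bar>\<phi>'' t / 2 - \<phi>'' 0 / 2\<bar> * x^2 \<le> \<delta> * x^2" by (intro mult_right_mono) auto
    moreover have "\<phi> x - 1 - \<phi>'' 0 / 2 * x^2 = (\<phi>'' t / 2 - \<phi>'' 0 / 2) * x^2"
      using t(3) by (simp add: algebra_simps)
    ultimately show ?thesis by (simp add: abs_mult)
  qed
  have "\<bar>\<phi> x - 1 - \<phi>'' 0 / 2 * x^2\<bar> \<le> \<delta> * x^2" if "\<bar>x\<bar> < \<eta>" for x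
  proof (cases "x = 0")
    case True then show ?thesis using phi0 by simp
  next
    case False
    show ?thesis
    proof (cases "x > 0")
      case True then show ?thesis using pos that by auto
    next
      case False
      then have "0 < - x" "- x < \<eta>" using \<open>x \<noteq> 0\<close> that by auto
      from pos[OF this] show ?thesis using phi_sym[of x] by simp
    qed
  qed
  moreover have "\<eta> > 0" using \<eta>0 unfolding \<eta>_def by auto
  ultimately show ?thesis by blast
qed

lemma phi_global:
  fixes \<phi> :: "real \<Rightarrow> real"
  assumes phi_range: "\<And>x. 0 \<le> \<phi> x \<and> \<phi> x \<le> 1"
    and loc: "\<exists>\<eta>>0. \<forall>x. \<bar>x\<bar> < \<eta> \<longrightarrow> \<bar>\<phi> x - 1 - c * x^2\<bar> \<le> 1 * x^2"
  shows "\<exists>R\<ge>0. \<forall>x. \<bar>\<phi> x - 1 - c * x^2\<bar> \<le> R * x^2"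
proof -
  obtain \<eta> where \<eta>: "\<eta> > 0" "\<And>x. \<bar>x\<bar> < \<eta> \<Longrightarrow> \<bar>\<phi> x - 1 - c * x^2\<bar> \<le> 1 * x^2"
    using loc by blast
  define R where "R = 1 + 1 / \<eta>^2 + \<bar>c\<bar>"
  have "\<bar>\<phi> x - 1 - c * x^2\<bar> \<le> R * x^2" for x
  proof (cases "\<bar>x\<bar> < \<eta>")
    case True
    then have "\<bar>\<phi> x - 1 - c * x^2\<bar> \<le> 1 * x^2" using \<eta> by blast
    also have "\<dots> \<le> R * x^2" unfolding R_def by (intro mult_right_mono) auto
    finally show ?thesis .
  next
    case False
    then have "\<eta>^2 \<le> x^2" using \<eta>(1) by (metis abs_le_square_iff abs_of_pos not_less)
    then have "1 \<le> x^2 / \<eta>^2" using \<eta>(1) by (simp add: field_simps)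
    have h: "\<bar>c * x^2\<bar> = \<bar>c\<bar> * x^2" by (simp add: abs_mult)
    have "\<bar>\<phi> x - 1 - c * x^2\<bar> \<le> \<bar>\<phi> x - 1\<bar> + \<bar>c\<bar> * x^2" using h by (smt (verit))
    also have "\<bar>\<phi> x - 1\<bar> \<le> 1" using phi_range[of x] by auto
    also have "1 \<le> x^2 / \<eta>^2" by fact
    also have "x^2/\<eta>^2 + \<bar>c\<bar> * x^2 \<le> R * x^2" unfolding R_def by (simp add: field_simps)
    finally show ?thesis by simp
  qed
  moreover have "R \<ge> 0" unfolding R_def by simp
  ultimately show ?thesis by blast
qed



definition leset :: "real^'d \<Rightarrow> (real^'d) set" where
  "leset u = {x. \<forall>j. x $ j \<le> u $ j}"

lemma ind_le_indicator: "ind_le x u = indicator (leset u) x"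
  by (simp add: ind_le_def indicator_def leset_def)

lemma leset_closed: "closed (leset u)"
  unfolding leset_def by (intro closed_Collect_all closed_Collect_le continuous_intros)

lemma leset_borel: "leset u \<in> sets borel"
  using leset_closed by (rule borel_closed)

lemma ind_le_borel: "(\<lambda>x. ind_le x u) \<in> borel_measurable borel"
  unfolding ind_le_indicator by (intro borel_measurable_indicator leset_borel)

lemma ind_le_bounds: "0 \<le> ind_le x u" "ind_le x u \<le> 1"
  by (auto simp: ind_le_def)

lemma shift_integral:
  fixes M :: "'a measure" and U :: "int \<Rightarrow> 'a \<Rightarrow> real^'d"
    and p q :: "real^'d \<Rightarrow> real"
  assumes meas: "\<And>i. U i \<in> borel_measurable M"
    and stat: "strictly_stationary M U"
    and p: "p \<in> borel_measurable borel" and q: "q \<in> borel_measurable borel"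
  shows "integral\<^sup>L M (\<lambda>\<omega>. p (U i \<omega>) * q (U j \<omega>)) = integral\<^sup>L M (\<lambda>\<omega>. p (U 0 \<omega>) * q (U (j - i) \<omega>))"
proof -
  define I where "I = {0, j - i}"
  define N where "N = PiM I (\<lambda>_. borel :: (real^'d) measure)"
  have fin: "finite I" unfolding I_def by simp
  have eq: "distr M N (\<lambda>\<omega>. \<lambda>t\<in>I. U t \<omega>) = distr M N (\<lambda>\<omega>. \<lambda>t\<in>I. U (t + i) \<omega>)"
    using stat fin unfolding strictly_stationary_def N_def by blast
  define F where "F = (\<lambda>x::int \<Rightarrow> real^'d. p (x 0) * q (x (j - i)))"
  have Fm: "F \<in> borel_measurable N"
    using p q unfolding F_def N_def I_def by measurable
  have m1: "(\<lambda>\<omega>. \<lambda>t\<in>I. U t \<omega>) \<in> measurable M N"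
    unfolding N_def by (intro measurable_restrict meas)
  have m2: "(\<lambda>\<omega>. \<lambda>t\<in>I. U (t + i) \<omega>) \<in> measurable M N"
    unfolding N_def by (intro measurable_restrict meas)
  have "integral\<^sup>L M (\<lambda>\<omega>. p (U i \<omega>) * q (U j \<omega>)) = integral\<^sup>L M (\<lambda>\<omega>. F (\<lambda>t\<in>I. U (t + i) \<omega>))"
    by (simp add: F_def I_def)
  also have "\<dots> = integral\<^sup>L (distr M N (\<lambda>\<omega>. \<lambda>t\<in>I. U (t + i) \<omega>)) F"
    by (rule integral_distr[symmetric, OF m2 Fm])
  also have "\<dots> = integral\<^sup>L (distr M N (\<lambda>\<omega>. \<lambda>t\<in>I. U t \<omega>)) F" by (simp add: eq)
  also have "\<dots> = integral\<^sup>L M (\<lambda>\<omega>. F (\<lambda>t\<in>I. U t \<omega>))"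
    by (rule integral_distr[OF m1 Fm])
  also have "\<dots> = integral\<^sup>L M (\<lambda>\<omega>. p (U 0 \<omega>) * q (U (j - i) \<omega>))"
    by (simp add: F_def I_def)
  finally show ?thesis .
qed

lemma cov_cong:
  assumes "\<And>\<omega>. \<omega> \<in> space M \<Longrightarrow> X \<omega> = X' \<omega>" "\<And>\<omega>. \<omega> \<in> space M \<Longrightarrow> Y \<omega> = Y' \<omega>"
  shows "cov M X Y = cov M X' Y'"
proof -
  have "integral\<^sup>L M X = integral\<^sup>L M X'" by (rule Bochner_Integration.integral_cong) (auto simp: assms)
  moreover have "integral\<^sup>L M Y = integral\<^sup>L M Y'" by (rule Bochner_Integration.integral_cong) (auto simp: assms)
  then show ?thesis unfolding cov_def using assms by (auto intro!: Bochner_Integration.integral_cong)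
qed

lemma cov_indicator:
  assumes P: "prob_space M" and A: "A \<in> sets M" and B: "B \<in> sets M"
  shows "cov M (indicator A) (indicator B) = measure M (A \<inter> B) - measure M A * measure M B"
proof -
  interpret prob_space M by (rule P)
  have iA: "integrable M (indicator A :: _ \<Rightarrow> real)" using A by (intro integrable_const_bound[where B=1]) auto
  have iB: "integrable M (indicator B :: _ \<Rightarrow> real)" using B by (intro integrable_const_bound[where B=1]) auto
  have eA: "integral\<^sup>L M (indicator A) = measure M A" using A by (simp add: Int_absorb2 sets.sets_into_space)
  have eB: "integral\<^sup>L M (indicator B) = measure M B" using B by (simp add: Int_absorb2 sets.sets_into_space)
  have eAB: "integral\<^sup>L M (indicator (A \<inter> B)) = measure M (A \<inter> B)" using A B
    by (simp add: Int_absorb2 sets.sets_into_space sets.Int)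
  have "(\<lambda>\<omega>. (indicator A \<omega> - measure M A) * (indicator B \<omega> - measure M B))
     = (\<lambda>\<omega>. indicator (A \<inter> B) \<omega> - measure M B * indicator A \<omega> - measure M A * indicator B \<omega> + measure M A * measure M B :: real)"
    by (auto simp: fun_eq_iff indicator_def algebra_simps)
  moreover have "integral\<^sup>L M (\<lambda>\<omega>. indicator (A \<inter> B) \<omega> - measure M B * indicator A \<omega> - measure M A * indicator B \<omega> + measure M A * measure M B :: real)
     = measure M (A \<inter> B) - measure M B * measure M A - measure M A * measure M B + measure M A * measure M B"
  proof -
    have iAB: "integrable M (indicator (A \<inter> B) :: _ \<Rightarrow> real)" using A B by (intro integrable_const_bound[where B=1]) auto
    let ?a = "measure M A" and ?b = "measure M B"
    have "integral\<^sup>L M (\<lambda>\<omega>. indicator (A \<inter> B) \<omega> - ?b * indicator A \<omega> - ?a * indicator B \<omega> + ?a * ?b :: real)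
      = integral\<^sup>L M (\<lambda>\<omega>. indicator (A \<inter> B) \<omega> - ?b * indicator A \<omega> - ?a * indicator B \<omega>) + ?a * ?b"
      using iA iB iAB prob_space by (subst Bochner_Integration.integral_add) auto
    also have "integral\<^sup>L M (\<lambda>\<omega>. indicator (A \<inter> B) \<omega> - ?b * indicator A \<omega> - ?a * indicator B \<omega> :: real)
      = integral\<^sup>L M (\<lambda>\<omega>. indicator (A \<inter> B) \<omega> - ?b * indicator A \<omega> :: real) - ?a * ?b"
      using iA iB iAB eB by (subst Bochner_Integration.integral_diff) (auto simp: integral_mult_right_zero)
    also have "integral\<^sup>L M (\<lambda>\<omega>. indicator (A \<inter> B) \<omega> - ?b * indicator A \<omega> :: real) = measure M (A \<inter> B) - ?b * ?a"
      using iA iB iAB eA eAB by (subst Bochner_Integration.integral_diff) (auto simp: integral_mult_right_zero)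
    finally show ?thesis by simp
  qed
  ultimately show ?thesis unfolding cov_def eA eB by simp
qed



lemma absdiff_le1: "0 \<le> (a::real) \<Longrightarrow> a \<le> 1 \<Longrightarrow> 0 \<le> b \<Longrightarrow> b \<le> 1 \<Longrightarrow> 0 \<le> c \<Longrightarrow> c \<le> 1 \<Longrightarrow> \<bar>a - b * c\<bar> \<le> 1"
proof -
  assume h: "0 \<le> a" "a \<le> 1" "0 \<le> b" "b \<le> 1" "0 \<le> c" "c \<le> 1"
  then have "b * c \<le> 1" "0 \<le> b * c" by (auto intro: mult_le_one)
  then show ?thesis using h by linarith
qed

lemma gamma_bounds:
  fixes M :: "'a measure" and U :: "int \<Rightarrow> 'a \<Rightarrow> real^'d"
  assumes P: "prob_space M" and meas: "\<And>i. U i \<in> borel_measurable M"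
  shows "\<bar>gamma_cov M U k u v\<bar> \<le> alpha_mix M U (nat \<bar>k\<bar>)" "\<bar>gamma_cov M U k u v\<bar> \<le> 1"
proof -
  interpret prob_space M by (rule P)
  define E where "E = (\<lambda>i w. U i -` leset w \<inter> space M)"
  have Ev: "E i w \<in> sets M" for i w unfolding E_def by (rule measurable_sets[OF meas leset_borel])
  have Eg: "E i w \<in> gen_sigma M U I" if "i \<in> I" for i w I
    unfolding gen_sigma_def E_def by (rule sigma_sets.Basic) (use that leset_borel in blast)
  have g: "gamma_cov M U k u v = cov M (indicator (E 0 u)) (indicator (E k v))"
    unfolding gamma_cov_def by (rule cov_cong) (auto simp: E_def ind_le_indicator indicator_def)
  have g2: "gamma_cov M U k u v = measure M (E 0 u \<inter> E k v) - measure M (E 0 u) * measure M (E k v)"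
    unfolding g by (rule cov_indicator[OF P Ev Ev])
  define S where "S = {\<bar>measure M (A \<inter> B) - measure M A * measure M B\<bar> | p A B.
      A \<in> gen_sigma M U {..p} \<and> B \<in> gen_sigma M U {p + int (nat \<bar>k\<bar>)..}}"
  have bdd: "bdd_above S"
    unfolding S_def by (rule bdd_aboveI[where M=1]) (auto intro!: absdiff_le1)
  show "\<bar>gamma_cov M U k u v\<bar> \<le> 1" unfolding g2 by (auto intro!: absdiff_le1)
  have "\<bar>gamma_cov M U k u v\<bar> \<in> S"
  proof (cases "k \<ge> 0")
    case True
    have "E 0 u \<in> gen_sigma M U {..0}" by (rule Eg) auto
    moreover have "E k v \<in> gen_sigma M U {0 + int (nat \<bar>k\<bar>)..}" by (rule Eg) (use True in auto)
    ultimately show ?thesis unfolding S_def g2 by blast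
  next
    case False
    have "E k v \<in> gen_sigma M U {..k}" by (rule Eg) auto
    moreover have "E 0 u \<in> gen_sigma M U {k + int (nat \<bar>k\<bar>)..}" by (rule Eg) (use False in auto)
    moreover have "\<bar>measure M (E k v \<inter> E 0 u) - measure M (E k v) * measure M (E 0 u)\<bar> = \<bar>gamma_cov M U k u v\<bar>"
      unfolding g2 by (simp add: Int_commute mult.commute)
    ultimately have "\<exists>p A B. \<bar>gamma_cov M U k u v\<bar> = \<bar>measure M (A \<inter> B) - measure M A * measure M B\<bar> \<and>
       A \<in> gen_sigma M U {..p} \<and> B \<in> gen_sigma M U {p + int (nat \<bar>k\<bar>)..}"
      by (intro exI[of _ k] exI[of _ "E k v"] exI[of _ "E 0 u"]) auto
    then show ?thesis unfolding S_def by blast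
  qed
  then show "\<bar>gamma_cov M U k u v\<bar> \<le> alpha_mix M U (nat \<bar>k\<bar>)"
    unfolding alpha_mix_def S_def[symmetric] using bdd by (rule cSup_upper)
qed



lemma gamma_eq:
  fixes M :: "'a measure" and U :: "int \<Rightarrow> 'a \<Rightarrow> real^'d" and C :: "real^'d \<Rightarrow> real"
  assumes P: "prob_space M" and meas: "\<And>i. U i \<in> borel_measurable M"
    and stat: "strictly_stationary M U"
    and cdf: "\<And>u. C u = measure M {\<omega> \<in> space M. \<forall>j. U 0 \<omega> $ j \<le> u $ j}"
  shows "gamma_cov M U k u v = integral\<^sup>L M (\<lambda>\<omega>. (ind_le (U 0 \<omega>) u - C u) * (ind_le (U k \<omega>) v - C v))"
proof -
  interpret prob_space M by (rule P)
  have e0: "integral\<^sup>L M (\<lambda>\<omega>. ind_le (U 0 \<omega>) w) = C w" for w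
  proof -
    have "integral\<^sup>L M (\<lambda>\<omega>. ind_le (U 0 \<omega>) w) = integral\<^sup>L M (indicator {\<omega> \<in> space M. \<forall>j. U 0 \<omega> $ j \<le> w $ j})"
      by (rule Bochner_Integration.integral_cong) (auto simp: ind_le_def indicator_def)
    also have "\<dots> = C w" by (simp add: cdf Int_absorb2)
    finally show ?thesis .
  qed
  have ek: "integral\<^sup>L M (\<lambda>\<omega>. ind_le (U k \<omega>) v) = C v"
  proof -
    have "integral\<^sup>L M (\<lambda>\<omega>. ind_le (U k \<omega>) v) = integral\<^sup>L M (\<lambda>\<omega>. (\<lambda>_. 1) (U k \<omega>) * (\<lambda>x. ind_le x v) (U k \<omega>))"
      by simp
    also have "\<dots> = integral\<^sup>L M (\<lambda>\<omega>. (\<lambda>_. 1) (U 0 \<omega>) * (\<lambda>x. ind_le x v) (U (k - k) \<omega>))"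
      by (rule shift_integral[OF meas stat]) (auto intro: ind_le_borel)
    also have "\<dots> = C v" using e0 by simp
    finally show ?thesis .
  qed
  show ?thesis unfolding gamma_cov_def cov_def e0 ek ..
qed

lemma term_eq:
  fixes M :: "'a measure" and U :: "int \<Rightarrow> 'a \<Rightarrow> real^'d" and C :: "real^'d \<Rightarrow> real"
  assumes P: "prob_space M" and meas: "\<And>i. U i \<in> borel_measurable M"
    and stat: "strictly_stationary M U"
    and cdf: "\<And>u. C u = measure M {\<omega> \<in> space M. \<forall>j. U 0 \<omega> $ j \<le> u $ j}"
  shows "integral\<^sup>L M (\<lambda>\<omega>. (ind_le (U i \<omega>) u - C u) * (ind_le (U j \<omega>) v - C v)) = gamma_cov M U (j - i) u v"
proof -
  have "integral\<^sup>L M (\<lambda>\<omega>. (\<lambda>x. ind_le x u - C u) (U i \<omega>) * (\<lambda>x. ind_le x v - C v) (U j \<omega>))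
     = integral\<^sup>L M (\<lambda>\<omega>. (\<lambda>x. ind_le x u - C u) (U 0 \<omega>) * (\<lambda>x. ind_le x v - C v) (U (j - i) \<omega>))"
    by (rule shift_integral[OF meas stat]) (auto intro!: borel_measurable_diff ind_le_borel)
  then show ?thesis using gamma_eq[OF P meas stat cdf, of "j - i" u v] by simp
qed

lemma expect_sigma:
  fixes M :: "'a measure" and U :: "int \<Rightarrow> 'a \<Rightarrow> real^'d" and C :: "real^'d \<Rightarrow> real"
  assumes P: "prob_space M" and meas: "\<And>i. U i \<in> borel_measurable M"
    and stat: "strictly_stationary M U"
    and cdf: "\<And>u. C u = measure M {\<omega> \<in> space M. \<forall>j. U 0 \<omega> $ j \<le> u $ j}"
  shows "integral\<^sup>L M (sigma_tilde \<phi> l C U n u v)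
     = (1 / real n) * (\<Sum>i\<in>{1..int n}. \<Sum>j\<in>{1..int n}. \<phi> (real_of_int (i - j) / l) * gamma_cov M U (j - i) u v)"
proof -
  interpret prob_space M by (rule P)
  have Cb: "0 \<le> C w" "C w \<le> 1" for w using cdf[of w] by auto
  have intg: "integrable M (\<lambda>\<omega>. (ind_le (U i \<omega>) u - C u) * (ind_le (U j \<omega>) v - C v))" for i j
  proof (rule integrable_const_bound[where B=1])
    show "AE x in M. norm ((ind_le (U i x) u - C u) * (ind_le (U j x) v - C v)) \<le> 1"
    proof (intro AE_I2)
      fix x
      have "\<bar>ind_le (U i x) u - C u\<bar> \<le> 1" "\<bar>ind_le (U j x) v - C v\<bar> \<le> 1"
        using Cb[of u] Cb[of v] ind_le_bounds[of "U i x" u] ind_le_bounds[of "U j x" v] by auto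
      then show "norm ((ind_le (U i x) u - C u) * (ind_le (U j x) v - C v)) \<le> 1"
        by (simp add: abs_mult mult_le_one)
    qed
    show "(\<lambda>\<omega>. (ind_le (U i \<omega>) u - C u) * (ind_le (U j \<omega>) v - C v)) \<in> borel_measurable M"
      by (intro borel_measurable_times borel_measurable_diff measurable_compose[OF meas ind_le_borel]) auto
  qed
  have "integral\<^sup>L M (sigma_tilde \<phi> l C U n u v) = (1 / real n) *
     integral\<^sup>L M (\<lambda>\<omega>. \<Sum>i\<in>{1..int n}. \<Sum>j\<in>{1..int n}. \<phi> (real_of_int (i - j) / l)
        * ((ind_le (U i \<omega>) u - C u) * (ind_le (U j \<omega>) v - C v)))"
    unfolding sigma_tilde_def by (simp add: mult.assoc)
  also have "integral\<^sup>L M (\<lambda>\<omega>. \<Sum>i\<in>{1..int n}. \<Sum>j\<in>{1..int n}. \<phi> (real_of_int (i - j) / l)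
        * ((ind_le (U i \<omega>) u - C u) * (ind_le (U j \<omega>) v - C v)))
     = (\<Sum>i\<in>{1..int n}. \<Sum>j\<in>{1..int n}. \<phi> (real_of_int (i - j) / l) * gamma_cov M U (j - i) u v)"
    using intg by (simp add: Bochner_Integration.integral_sum term_eq[OF P meas stat cdf])
  finally show ?thesis .
qed



lemma dom_summable:
  fixes f D :: "int \<Rightarrow> real"
  assumes "D summable_on A" "\<And>k. k \<in> A \<Longrightarrow> \<bar>f k\<bar> \<le> D k"
  shows "f summable_on A"
proof -
  have "(\<lambda>x. norm (D x)) summable_on A" using assms(1) summable_on_iff_abs_summable_on_real by blast
  then have "(\<lambda>x. norm (f x)) summable_on A"
    by (rule Infinite_Sum.abs_summable_on_comparison_test) (use assms(2) in force)
  then show ?thesis using summable_on_iff_abs_summable_on_real by blast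
qed

lemma dom_infsum:
  fixes f D :: "int \<Rightarrow> real"
  assumes "D summable_on A" "\<And>k. k \<in> A \<Longrightarrow> \<bar>f k\<bar> \<le> D k"
  shows "\<bar>infsum f A\<bar> \<le> infsum D A"
proof -
  have "(\<lambda>k. \<bar>f k\<bar>) summable_on A" by (rule dom_summable[OF assms(1)]) (use assms(2) in auto)
  then have "(\<lambda>x. norm (f x)) summable_on A" by simp
  then have "norm (infsum f A) \<le> infsum (\<lambda>k. norm (f k)) A" by (rule norm_infsum_bound)
  also have "\<dots> \<le> infsum D A"
    by (rule infsum_mono) (use \<open>(\<lambda>k. \<bar>f k\<bar>) summable_on A\<close> assms in auto)
  finally show ?thesis by simp
qed

lemma split_infsum:
  fixes f :: "int \<Rightarrow> real"
  assumes "f summable_on UNIV" "finite F"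
  shows "infsum f UNIV = sum f F + infsum f (- F)"
proof -
  have "f summable_on (- F)" using assms(1) by (rule summable_on_subset) auto
  then have "infsum f (F \<union> - F) = infsum f F + infsum f (- F)"
    by (intro infsum_Un_disjoint) (use assms in auto)
  then show ?thesis using assms(2) by simp
qed

lemma tail_bound:
  fixes G :: "int \<Rightarrow> real" and n :: nat and i :: int
  assumes G0: "\<And>k. G k \<ge> 0"
    and HS: "(\<lambda>k. (real_of_int k)^2 * G k) summable_on UNIV"
    and i: "1 \<le> i" "i \<le> int n"
  shows "infsum G (- {1 - i..int n - i}) \<le> infsum (\<lambda>k. (real_of_int k)^2 * G k) UNIV
            * (1 / (real_of_int i)^2 + 1 / (real_of_int (int n + 1 - i))^2)"
proof -
  define c where "c = 1 / (real_of_int i)^2 + 1 / (real_of_int (int n + 1 - i))^2"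
  define H where "H = (\<lambda>k. (real_of_int k)^2 * G k)"
  have c0: "c \<ge> 0" unfolding c_def by simp
  have bnd: "G k \<le> c * H k" if "k \<in> - {1 - i..int n - i}" for k
  proof -
    from that have "k \<le> - i \<or> k \<ge> int n + 1 - i" by auto
    then obtain m where m: "m \<ge> 1" "\<bar>k\<bar> \<ge> m" "1 / (real_of_int m)^2 \<le> c"
    proof
      assume "k \<le> - i"
      moreover have "1 / (real_of_int i)^2 \<le> c" unfolding c_def by simp
      ultimately show ?thesis using that[of i] i by auto
    next
      assume "k \<ge> int n + 1 - i"
      moreover have "1 / (real_of_int (int n + 1 - i))^2 \<le> c" unfolding c_def by simp
      ultimately show ?thesis using that[of "int n + 1 - i"] i by auto
    qed
    have "real_of_int m \<le> \<bar>real_of_int k\<bar>" using m(2) by linarith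
    then have "(real_of_int m)^2 \<le> (real_of_int k)^2"
      using m(1) by (metis abs_of_nonneg dual_order.trans of_int_1_le_iff power2_abs power_mono zero_le_one)
    then have "1 \<le> (real_of_int k)^2 / (real_of_int m)^2" using m(1) by simp
    then have "1 * G k \<le> (real_of_int k)^2 / (real_of_int m)^2 * G k" using G0[of k]
      by (intro mult_right_mono) auto
    also have "\<dots> = 1 / (real_of_int m)^2 * H k" unfolding H_def by simp
    also have "\<dots> \<le> c * H k" using m(3) G0[of k] unfolding H_def by (intro mult_right_mono) auto
    finally show ?thesis by simp
  qed
  have HS': "H summable_on (- {1 - i..int n - i})" using HS unfolding H_def by (rule summable_on_subset) auto
  have GS: "G summable_on (- {1 - i..int n - i})"
    by (rule dom_summable[where D="\<lambda>k. c * H k"]) (use HS' bnd G0 in \<open>auto intro: summable_on_cmult_right\<close>)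
  have "infsum G (- {1 - i..int n - i}) \<le> infsum (\<lambda>k. c * H k) (- {1 - i..int n - i})"
    by (rule infsum_mono) (use GS HS' bnd in \<open>auto intro: summable_on_cmult_right\<close>)
  also have "\<dots> = c * infsum H (- {1 - i..int n - i})" by (rule infsum_cmult_right) (use HS' in simp)
  also have "infsum H (- {1 - i..int n - i}) \<le> infsum H UNIV"
    by (rule infsum_mono2) (use HS' HS G0 in \<open>auto simp: H_def\<close>)
  then have "c * infsum H (- {1 - i..int n - i}) \<le> c * infsum H UNIV" using c0 by (rule mult_left_mono)
  finally show ?thesis unfolding c_def H_def by (simp add: mult.commute)
qed



lemma termA:
  fixes g G :: "int \<Rightarrow> real" and \<phi> :: "real \<Rightarrow> real" and l :: real and n :: nat
  assumes G0: "\<And>k. G k \<ge> 0" and GS: "G summable_on UNIV"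
    and HS: "(\<lambda>k. (real_of_int k)^2 * G k) summable_on UNIV"
    and gG: "\<And>k. \<bar>g k\<bar> \<le> G k"
    and phi_range: "\<And>x. 0 \<le> \<phi> x \<and> \<phi> x \<le> 1"
    and phi_sym: "\<And>x. \<phi> (- x) = \<phi> x"
    and n: "n \<ge> 1"
  shows "\<bar>(1 / real n) * (\<Sum>i\<in>{1..int n}. \<Sum>j\<in>{1..int n}. \<phi> (real_of_int (i - j) / l) * g (j - i))
          - infsum (\<lambda>k. \<phi> (real_of_int k / l) * g k) UNIV\<bar>
       \<le> 4 * infsum (\<lambda>k. (real_of_int k)^2 * G k) UNIV / real n"
proof -
  define w where "w = (\<lambda>k. \<phi> (real_of_int k / l) * g k)"
  define K where "K = infsum (\<lambda>k. (real_of_int k)^2 * G k) UNIV"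
  define c where "c = (\<lambda>i. 1 / (real_of_int i)^2 + 1 / (real_of_int (int n + 1 - i))^2)"
  have K0: "K \<ge> 0" unfolding K_def by (rule infsum_nonneg) (use G0 in auto)
  have wG: "\<bar>w k\<bar> \<le> G k" for k
  proof -
    have "\<bar>w k\<bar> = \<phi> (real_of_int k / l) * \<bar>g k\<bar>" unfolding w_def using phi_range by (simp add: abs_mult)
    also have "\<dots> \<le> 1 * \<bar>g k\<bar>" using phi_range by (intro mult_right_mono) auto
    finally show ?thesis using gG[of k] by simp
  qed
  have wS: "w summable_on UNIV" by (rule dom_summable[OF GS]) (use wG in auto)
  have inner: "\<bar>(\<Sum>j\<in>{1..int n}. \<phi> (real_of_int (i - j) / l) * g (j - i)) - infsum w UNIV\<bar> \<le> K * c i"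
    if i: "i \<in> {1..int n}" for i
  proof -
    have "(\<Sum>j\<in>{1..int n}. \<phi> (real_of_int (i - j) / l) * g (j - i)) = sum w {1 - i..int n - i}"
    proof (rule sum.reindex_bij_witness[of _ "\<lambda>k. k + i" "\<lambda>j. j - i"])
      fix a assume "a \<in> {1..int n}"
      have "real_of_int (i - a) / l = - (real_of_int (a - i) / l)" by (metis minus_diff_eq minus_divide_left of_int_minus)
      then show "w (a - i) = \<phi> (real_of_int (i - a) / l) * g (a - i)"
        unfolding w_def using phi_sym by simp
    qed auto
    moreover have "infsum w UNIV = sum w {1 - i..int n - i} + infsum w (- {1 - i..int n - i})"
      by (rule split_infsum[OF wS]) simp
    moreover have "\<bar>infsum w (- {1 - i..int n - i})\<bar> \<le> infsum G (- {1 - i..int n - i})"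
      by (rule dom_infsum) (use GS wG in \<open>auto intro: summable_on_subset\<close>)
    moreover have "infsum G (- {1 - i..int n - i}) \<le> K * c i"
      unfolding K_def c_def by (rule tail_bound[OF G0 HS]) (use i in auto)
    ultimately show ?thesis by simp
  qed
  have nn: "real n > 0" using n by simp
  have "(1 / real n) * (\<Sum>i\<in>{1..int n}. \<Sum>j\<in>{1..int n}. \<phi> (real_of_int (i - j) / l) * g (j - i))
          - infsum w UNIV
      = (1 / real n) * (\<Sum>i\<in>{1..int n}. (\<Sum>j\<in>{1..int n}. \<phi> (real_of_int (i - j) / l) * g (j - i)) - infsum w UNIV)"
  proof -
    have "card {1..int n} = n" by simp
    then have "(\<Sum>i\<in>{1..int n}. (\<Sum>j\<in>{1..int n}. \<phi> (real_of_int (i - j) / l) * g (j - i)) - infsum w UNIV)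
      = (\<Sum>i\<in>{1..int n}. \<Sum>j\<in>{1..int n}. \<phi> (real_of_int (i - j) / l) * g (j - i)) - real n * infsum w UNIV"
      by (simp add: sum_subtractf)
    then show ?thesis using nn by (simp add: right_diff_distrib)
  qed
  also have "\<bar>\<dots>\<bar> \<le> (1 / real n) * (\<Sum>i\<in>{1..int n}. K * c i)"
  proof -
    have "\<bar>\<Sum>i\<in>{1..int n}. (\<Sum>j\<in>{1..int n}. \<phi> (real_of_int (i - j) / l) * g (j - i)) - infsum w UNIV\<bar>
       \<le> (\<Sum>i\<in>{1..int n}. K * c i)"
      by (rule order.trans[OF sum_abs]) (intro sum_mono inner, assumption)
    moreover have e: "\<bar>1 / real n\<bar> = 1 / real n" by simp
    ultimately show ?thesis unfolding abs_mult e by (intro mult_left_mono) auto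
  qed
  also have "(\<Sum>i\<in>{1..int n}. K * c i) = K * ((\<Sum>i\<in>{1..int n}. 1 / (real_of_int i)^2)
       + (\<Sum>i\<in>{1..int n}. 1 / (real_of_int (int n + 1 - i))^2))"
    unfolding c_def by (simp add: sum_distrib_left sum.distrib distrib_left)
  also have "(\<Sum>i\<in>{1..int n}. 1 / (real_of_int (int n + 1 - i))^2) = (\<Sum>i\<in>{1..int n}. 1 / (real_of_int i)^2)"
    by (rule sum_reflect_int)
  also have "K * ((\<Sum>i\<in>{1..int n}. 1 / (real_of_int i)^2) + (\<Sum>i\<in>{1..int n}. 1 / (real_of_int i)^2)) \<le> K * 4"
    using inv_sq_sum[of n] K0 by (intro mult_left_mono) auto
  finally show ?thesis using nn unfolding w_def K_def by (simp add: field_simps)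
qed



lemma summable_on_diff_real:
  fixes f g :: "'a \<Rightarrow> real"
  assumes "f summable_on A" "g summable_on A"
  shows "(\<lambda>x. f x - g x) summable_on A"
  using summable_on_add[OF assms(1) summable_on_uminus[THEN iffD2, OF assms(2)]] by simp

lemma infsum_diff_real:
  fixes f g :: "'a \<Rightarrow> real"
  assumes "f summable_on A" "g summable_on A"
  shows "infsum (\<lambda>x. f x - g x) A = infsum f A - infsum g A"
  using infsum_add[OF assms(1) summable_on_uminus[THEN iffD2, OF assms(2)]] infsum_uminus[of g A] by simp

lemma termB:
  fixes g G :: "int \<Rightarrow> real" and \<phi> :: "real \<Rightarrow> real" and l c \<delta> \<eta> R \<epsilon>' :: real and M :: nat
  assumes G0: "\<And>k. G k \<ge> 0" and GS: "G summable_on UNIV"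
    and HS: "(\<lambda>k. (real_of_int k)^2 * G k) summable_on UNIV"
    and gG: "\<And>k. \<bar>g k\<bar> \<le> G k"
    and loc: "\<And>x. \<bar>x\<bar> < \<eta> \<Longrightarrow> \<bar>\<phi> x - 1 - c * x^2\<bar> \<le> \<delta> * x^2"
    and glob: "\<And>x. \<bar>\<phi> x - 1 - c * x^2\<bar> \<le> R * x^2"
    and \<delta>0: "\<delta> \<ge> 0" and R0: "R \<ge> 0" and l0: "l > 0" and Ml: "real M < \<eta> * l"
    and phi_range: "\<And>x. 0 \<le> \<phi> x \<and> \<phi> x \<le> 1"
    and tail: "infsum (\<lambda>k. (real_of_int k)^2 * G k) UNIV - sum (\<lambda>k. (real_of_int k)^2 * G k) {- int M..int M} \<le> \<epsilon>'"
  shows "l^2 * \<bar>infsum (\<lambda>k. \<phi> (real_of_int k / l) * g k) UNIV - infsum g UNIV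
            - c * infsum (\<lambda>k. (real_of_int k)^2 * g k) UNIV / l^2\<bar>
       \<le> \<delta> * infsum (\<lambda>k. (real_of_int k)^2 * G k) UNIV + R * \<epsilon>'"
proof -
  define H where "H = (\<lambda>k. (real_of_int k)^2 * G k)"
  define K where "K = infsum H UNIV"
  define F where "F = {- int M..int M}"
  define w where "w = (\<lambda>k. \<phi> (real_of_int k / l) * g k)"
  define h where "h = (\<lambda>k. l^2 * ((\<phi> (real_of_int k / l) - 1 - c * (real_of_int k / l)^2) * g k))"
  have HS': "H summable_on UNIV" using HS unfolding H_def .
  have H0: "H k \<ge> 0" for k unfolding H_def using G0 by simp
  have wS: "w summable_on UNIV"
    by (rule dom_summable[OF GS]) (use gG phi_range in \<open>auto simp: w_def abs_mult intro: order.trans[OF mult_left_le_one_le]\<close>)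
  have gS: "g summable_on UNIV" by (rule dom_summable[OF GS]) (use gG in auto)
  have g2S: "(\<lambda>k. (real_of_int k)^2 * g k) summable_on UNIV"
    by (rule dom_summable[OF HS]) (use gG in \<open>auto simp: abs_mult intro: mult_left_mono\<close>)
  have eqh: "h k = l^2 * w k - l^2 * g k - c * ((real_of_int k)^2 * g k)" for k
    unfolding h_def w_def using l0 by (simp add: field_simps power2_eq_square)
  have "infsum h UNIV = l^2 * infsum w UNIV - l^2 * infsum g UNIV - c * infsum (\<lambda>k. (real_of_int k)^2 * g k) UNIV"
  proof -
    have "infsum h UNIV = infsum (\<lambda>k. l^2 * w k - l^2 * g k - c * ((real_of_int k)^2 * g k)) UNIV"
      by (intro infsum_cong eqh)
    also have "\<dots> = infsum (\<lambda>k. l^2 * w k - l^2 * g k) UNIV - infsum (\<lambda>k. c * ((real_of_int k)^2 * g k)) UNIV"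
      by (intro infsum_diff_real summable_on_diff_real summable_on_cmult_right wS gS g2S)
    also have "infsum (\<lambda>k. l^2 * w k - l^2 * g k) UNIV = infsum (\<lambda>k. l^2 * w k) UNIV - infsum (\<lambda>k. l^2 * g k) UNIV"
      by (intro infsum_diff_real summable_on_cmult_right wS gS)
    finally show ?thesis by (simp add: infsum_cmult_right' )
  qed
  then have main: "l^2 * (infsum w UNIV - infsum g UNIV - c * infsum (\<lambda>k. (real_of_int k)^2 * g k) UNIV / l^2) = infsum h UNIV"
  proof -
    have "l^2 * (c * infsum (\<lambda>k. (real_of_int k)^2 * g k) UNIV / l^2) = c * infsum (\<lambda>k. (real_of_int k)^2 * g k) UNIV"
      using l0 by simp
    then show ?thesis using \<open>infsum h UNIV = _\<close> by (simp add: right_diff_distrib)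
  qed
  define E where "E = (\<lambda>k. if k \<in> F then \<delta> * H k else R * H k)"
  have hE: "\<bar>h k\<bar> \<le> E k" for k
  proof -
    define x where "x = real_of_int k / l"
    define A where "A = \<bar>\<phi> x - 1 - c * x^2\<bar>"
    define D where "D = (if k \<in> F then \<delta> else R)"
    have D0: "D \<ge> 0" unfolding D_def using \<delta>0 R0 by simp
    have AD: "A \<le> D * x^2"
    proof (cases "k \<in> F")
      case True
      then have "\<bar>real_of_int k\<bar> \<le> real M" unfolding F_def by auto
      then have "\<bar>real_of_int k\<bar> < \<eta> * l" using Ml by linarith
      then have "\<bar>real_of_int k\<bar> / l < \<eta>" using l0 by (simp only: pos_divide_less_eq)
      moreover have "\<bar>x\<bar> = \<bar>real_of_int k\<bar> / l" unfolding x_def using l0 by (simp add: abs_divide)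
      ultimately have "\<bar>x\<bar> < \<eta>" by simp
      then show ?thesis using True loc unfolding A_def D_def by simp
    next
      case False then show ?thesis using glob unfolding A_def D_def by simp
    qed
    have "\<bar>h k\<bar> = l^2 * (A * \<bar>g k\<bar>)"
      unfolding h_def A_def x_def by (simp add: abs_mult)
    also have "\<dots> \<le> l^2 * ((D * x^2) * G k)"
      by (intro mult_left_mono mult_mono AD gG) (use D0 in auto)
    also have "l^2 * ((D * x^2) * G k) = D * ((l * x)^2 * G k)" by (simp add: power_mult_distrib)
    also have "l * x = real_of_int k" unfolding x_def using l0 by simp
    also have "D * ((real_of_int k)^2 * G k) = E k" unfolding E_def D_def H_def by simp
    finally show ?thesis .
  qed
  have ES: "E summable_on UNIV"
    by (rule dom_summable[where D="\<lambda>k. (\<delta> + R) * H k"]) (use HS' H0 \<delta>0 R0 in \<open>auto simp: E_def intro: summable_on_cmult_right mult_right_mono\<close>)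
  have "\<bar>infsum h UNIV\<bar> \<le> infsum E UNIV" by (rule dom_infsum[OF ES]) (use hE in auto)
  also have "infsum E UNIV = sum E F + infsum E (- F)" by (rule split_infsum[OF ES]) (simp add: F_def)
  also have "sum E F = \<delta> * sum H F" unfolding E_def by (simp add: sum_distrib_left)
  also have "infsum E (- F) = R * infsum H (- F)"
  proof -
    have "infsum E (- F) = infsum (\<lambda>k. R * H k) (- F)" by (rule infsum_cong) (simp add: E_def)
    also have "\<dots> = R * infsum H (- F)" by (rule infsum_cmult_right') 
    finally show ?thesis .
  qed
  also have KS: "K = sum H F + infsum H (- F)" unfolding K_def by (rule split_infsum[OF HS']) (simp add: F_def)
  have tail': "infsum H (- F) \<le> \<epsilon>'" using tail KS unfolding H_def K_def F_def by simp
  have "infsum H (- F) \<ge> 0" by (rule infsum_nonneg) (use H0 in auto)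
  then have "sum H F \<le> K" using KS by simp
  then have "\<delta> * sum H F + R * infsum H (- F) \<le> \<delta> * K + R * \<epsilon>'"
    using tail' \<delta>0 R0 by (intro add_mono mult_left_mono) auto
  finally have "\<bar>infsum h UNIV\<bar> \<le> \<delta> * K + R * \<epsilon>'" .
  then show ?thesis using main[symmetric] l0 unfolding w_def K_def H_def by (simp add: abs_mult)
qed



lemma majorant:
  fixes M :: "'a measure" and U :: "int \<Rightarrow> 'a \<Rightarrow> real^'d" and a :: real
  assumes P: "prob_space M" and meas: "\<And>i. U i \<in> borel_measurable M"
    and a3: "a > 3"
    and mix: "alpha_mix M U \<in> O(\<lambda>r. real r powr (- a))"
  obtains G :: "int \<Rightarrow> real" where "\<And>k. G k \<ge> 0" "G summable_on UNIV"
    "(\<lambda>k. (real_of_int k)^2 * G k) summable_on UNIV"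
    "\<And>k u v. \<bar>gamma_cov M U k u v\<bar> \<le> G k"
proof -
  obtain c0 where c0: "c0 > 0" "eventually (\<lambda>r. norm (alpha_mix M U r) \<le> c0 * norm (real r powr (- a))) at_top"
    using mix by (elim landau_o.bigE)
  then obtain N0 where N0: "\<And>r. r \<ge> N0 \<Longrightarrow> norm (alpha_mix M U r) \<le> c0 * norm (real r powr (- a))"
    unfolding eventually_at_top_linorder by blast
  define N where "N = max N0 1"
  define Gs where "Gs = (\<lambda>n::nat. if n < N then 1 else c0 * real n powr (- a))"
  have Gs0: "Gs n \<ge> 0" for n unfolding Gs_def using c0 by simp
  have gb: "\<bar>gamma_cov M U k u v\<bar> \<le> Gs (nat \<bar>k\<bar>)" for k u v
  proof (cases "nat \<bar>k\<bar> < N")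
    case True then show ?thesis using gamma_bounds(2)[OF P meas] unfolding Gs_def by simp
  next
    case False
    define r where "r = nat \<bar>k\<bar>"
    have rN: "\<not> r < N" "r \<ge> N0" using False unfolding r_def N_def by auto
    have "norm (alpha_mix M U r) \<le> c0 * norm (real r powr (- a))" using N0 rN by blast
    then have 1: "alpha_mix M U r \<le> c0 * real r powr (- a)" by simp
    have 2: "Gs r = c0 * real r powr (- a)" using rN by (simp add: Gs_def)
    have 3: "\<bar>gamma_cov M U k u v\<bar> \<le> alpha_mix M U r" unfolding r_def by (rule gamma_bounds(1)[OF P meas])
    show ?thesis using 1 2 3 unfolding r_def[symmetric] by linarith
  qed
  have sGs: "summable Gs"
  proof -
    have s: "summable (\<lambda>n. c0 * real n powr (- a))"
      using a3 by (intro summable_mult) (simp add: summable_real_powr_iff)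
    have ev: "eventually (\<lambda>n. Gs n = c0 * real n powr (- a)) sequentially"
      unfolding Gs_def eventually_at_top_linorder by (intro exI[of _ N]) auto
    show ?thesis using summable_cong[OF ev] s by simp
  qed
  define B where "B = (\<lambda>n. (real n)^2 * Gs n)"
  have B0: "B n \<ge> 0" for n unfolding B_def using Gs0 by simp
  have sB: "summable B"
  proof -
    have s: "summable (\<lambda>n. c0 * real n powr (2 - a))"
      using a3 by (intro summable_mult) (simp add: summable_real_powr_iff)
    have ev: "eventually (\<lambda>n. B n = c0 * real n powr (2 - a)) sequentially"
      unfolding eventually_at_top_linorder
    proof (intro exI[of _ N] allI impI)
      fix n assume n: "n \<ge> N"
      then have n0: "real n > 0" unfolding N_def by simp
      have "real n powr (2 - a) = real n powr 2 * real n powr (- a)"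
        by (metis powr_add diff_conv_add_uminus)
      moreover have "real n powr 2 = (real n)^2" using n0 powr_realpow[of "real n" 2] by simp
      ultimately have "(real n)^2 * real n powr (- a) = real n powr (2 - a)" by simp
      then show "B n = c0 * real n powr (2 - a)" unfolding B_def Gs_def using n by simp
    qed
    show ?thesis using summable_cong[OF ev] s by simp
  qed
  define G where "G = (\<lambda>k::int. Gs (nat \<bar>k\<bar>))"
  have "(\<lambda>k::int. (real_of_int k)^2 * G k) = (\<lambda>k. B (nat \<bar>k\<bar>))"
    unfolding G_def B_def by (auto simp: fun_eq_iff)
  then have "(\<lambda>k::int. (real_of_int k)^2 * G k) summable_on UNIV"
    using int_summable_from_nat[OF sB B0] by simp
  moreover have "G summable_on UNIV" unfolding G_def by (rule int_summable_from_nat[OF sGs Gs0])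
  ultimately show ?thesis using that[of G] Gs0 gb unfolding G_def by blast
qed



lemma rate:
  fixes ell :: "nat \<Rightarrow> real"
  assumes l_rate: "ell \<in> O(\<lambda>n. real n powr (1/2 - \<epsilon>))" and eps: "\<epsilon> > 0"
    and Kc: "Kc \<ge> 0" and e: "e > 0"
  shows "eventually (\<lambda>n. ell n ^ 2 * (Kc / real n) \<le> e) sequentially"
proof -
  obtain c1 where c1: "c1 > 0" "eventually (\<lambda>n. norm (ell n) \<le> c1 * norm (real n powr (1/2 - \<epsilon>))) at_top"
    using l_rate by (elim landau_o.bigE)
  have "((\<lambda>n. real n powr (- 2 * \<epsilon>)) \<longlongrightarrow> 0) sequentially"
    using eps by (intro tendsto_neg_powr filterlim_real_sequentially) auto
  then have "((\<lambda>n. Kc * c1^2 * real n powr (- 2 * \<epsilon>)) \<longlongrightarrow> Kc * c1^2 * 0) sequentially"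
    by (intro tendsto_mult_left)
  then have ev: "eventually (\<lambda>n. Kc * c1^2 * real n powr (- 2 * \<epsilon>) < e) sequentially"
    using e by (intro order_tendstoD(2)) auto
  show ?thesis
    using ev c1(2) eventually_ge_at_top[of 1]
  proof eventually_elim
    case (elim n)
    have n0: "real n > 0" using elim(3) by simp
    define p where "p = real n powr (1/2 - \<epsilon>)"
    have p0: "p \<ge> 0" unfolding p_def by simp
    have "\<bar>ell n\<bar> \<le> c1 * p" using elim(2) unfolding p_def by simp
    then have "\<bar>ell n\<bar>^2 \<le> (c1 * p)^2" by (intro power_mono) auto
    then have l2: "ell n ^ 2 \<le> c1^2 * (p * p)" by (simp add: power_mult_distrib power2_eq_square mult_ac)
    have pp: "p * p = real n powr (1 - 2 * \<epsilon>)" unfolding p_def by (simp add: powr_add[symmetric])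
    have q: "real n powr (1 - 2 * \<epsilon>) / real n = real n powr (- 2 * \<epsilon>)"
    proof -
      have "real n powr (- 2 * \<epsilon>) = real n powr ((1 - 2 * \<epsilon>) - 1)" by simp
      also have "\<dots> = real n powr (1 - 2 * \<epsilon>) / real n powr 1" by (rule powr_diff)
      finally show ?thesis using n0 by simp
    qed
    have "ell n ^ 2 * (Kc / real n) \<le> c1^2 * real n powr (1 - 2 * \<epsilon>) * (Kc / real n)"
      using l2 pp Kc n0 by (intro mult_right_mono) auto
    also have "\<dots> = Kc * c1^2 * (real n powr (1 - 2 * \<epsilon>) / real n)" by simp
    also have "\<dots> = Kc * c1^2 * real n powr (- 2 * \<epsilon>)" using q by simp
    finally show ?case using elim(1) by simp
  qed
qed



theorem proposition5p1:
  fixes M :: "'a measure" and U :: "int \<Rightarrow> 'a \<Rightarrow> real^'d"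
    and C :: "real^'d \<Rightarrow> real" and a :: real
    and ell :: "nat \<Rightarrow> real" and \<epsilon> :: real
    and \<phi> \<phi>' \<phi>'' :: "real \<Rightarrow> real"
  assumes "prob_space M"
    and meas: "\<And>i. U i \<in> borel_measurable M"
    and stat: "strictly_stationary M U"
    and cdf: "\<And>u. C u = measure M {\<omega> \<in> space M. \<forall>j. U 0 \<omega> $ j \<le> u $ j}"
    and copula: "\<And>j x. 0 \<le> x \<Longrightarrow> x \<le> 1 \<Longrightarrow> measure M {\<omega> \<in> space M. U 0 \<omega> $ j \<le> x} = x"
    and a3: "a > 3"
    and mix: "alpha_mix M U \<in> O(\<lambda>r. real r powr (- a))"
    and l_pos: "\<And>n. ell n > 0"
    and l_inf: "filterlim ell at_top sequentially"
    and eps: "0 < \<epsilon>" "\<epsilon> < 1/2"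
    and l_rate: "ell \<in> O(\<lambda>n. real n powr (1/2 - \<epsilon>))"
    and phi_range: "\<And>x. 0 \<le> \<phi> x \<and> \<phi> x \<le> 1"
    and phi_sym: "\<And>x. \<phi> (- x) = \<phi> x"
    and phi0: "\<phi> 0 = 1"
    and phi_supp: "\<And>x. \<bar>x\<bar> > 1 \<Longrightarrow> \<phi> x = 0"
    and phi_d1: "\<And>x. x \<in> {-1..1} \<Longrightarrow> (\<phi> has_real_derivative \<phi>' x) (at x within {-1..1})"
    and phi_d2: "\<And>x. x \<in> {-1..1} \<Longrightarrow> (\<phi>' has_real_derivative \<phi>'' x) (at x within {-1..1})"
    and phi_cont: "continuous_on {-1..1} \<phi>''"
    and phi2_nz: "\<phi>'' 0 \<noteq> 0"
  shows "\<forall>e>0. \<forall>\<^sub>F n in sequentially. \<forall>u\<in>unit_cube. \<forall>v\<in>unit_cube.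
     ell n ^ 2 * \<bar>(integral\<^sup>L M (sigma_tilde \<phi> (ell n) C U n u v) - sigma_C M U u v)
        - (\<phi>'' 0 / 2) * (\<Sum>\<^sub>\<infinity>k\<in>(UNIV::int set). real_of_int k ^ 2 * gamma_cov M U k u v) / ell n ^ 2\<bar> \<le> e"
proof -
  note P = assms(1)
  interpret prob_space M by (rule P)
  obtain G where G0: "\<And>k. G k \<ge> 0" and GS: "G summable_on UNIV"
    and HS: "(\<lambda>k. (real_of_int k)^2 * G k) summable_on UNIV"
    and gG: "\<And>k u v. \<bar>gamma_cov M U k u v\<bar> \<le> G k"
    using majorant[OF P meas a3 mix] by blast
  define H where "H = (\<lambda>k. (real_of_int k)^2 * G k)"
  define K where "K = infsum H UNIV"
  have H0: "H k \<ge> 0" for k unfolding H_def using G0 by simp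
  have K0: "K \<ge> 0" unfolding K_def by (rule infsum_nonneg) (use H0 in auto)
  define c where "c = \<phi>'' 0 / 2"
  have loc: "\<exists>\<eta>>0. \<forall>x. \<bar>x\<bar> < \<eta> \<longrightarrow> \<bar>\<phi> x - 1 - c * x^2\<bar> \<le> \<delta> * x^2" if "\<delta> > 0" for \<delta>
    unfolding c_def by (rule phi_taylor[OF phi_sym phi0 phi_d1 phi_d2 phi_cont that])
  obtain R where R0: "R \<ge> 0" and glob: "\<And>x. \<bar>\<phi> x - 1 - c * x^2\<bar> \<le> R * x^2"
    using phi_global[OF phi_range loc[of 1]] by auto
  show ?thesis
  proof (intro allI impI)
    fix e :: real assume e: "e > 0"
    define \<delta> where "\<delta> = e / (3 * (K + 1))"
    have \<delta>0: "\<delta> > 0" unfolding \<delta>_def using e K0 by simp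
    have \<delta>K: "\<delta> * K \<le> e / 3"
    proof -
      have "\<delta> * K = (e / 3) * (K / (K + 1))" unfolding \<delta>_def by (simp add: field_simps)
      also have "\<dots> \<le> (e / 3) * 1" using K0 e by (intro mult_left_mono) auto
      finally show ?thesis by simp
    qed
    obtain \<eta> where \<eta>: "\<eta> > 0" "\<And>x. \<bar>x\<bar> < \<eta> \<Longrightarrow> \<bar>\<phi> x - 1 - c * x^2\<bar> \<le> \<delta> * x^2"
      using loc[OF \<delta>0] by blast
    define \<epsilon>' where "\<epsilon>' = e / (3 * (R + 1))"
    have \<epsilon>'0: "\<epsilon>' > 0" unfolding \<epsilon>'_def using e R0 by simp
    have R\<epsilon>: "R * \<epsilon>' \<le> e / 3"
    proof -
      have "R * \<epsilon>' = (e / 3) * (R / (R + 1))" unfolding \<epsilon>'_def by (simp add: field_simps)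
      also have "\<dots> \<le> (e / 3) * 1" using R0 e by (intro mult_left_mono) auto
      finally show ?thesis by simp
    qed
    obtain F0 where F0: "finite F0" "dist (sum H F0) K \<le> \<epsilon>'"
      using infsum_finite_approximation[OF HS[folded H_def] \<epsilon>'0] unfolding K_def by blast
    define Mb where "Mb = nat (\<Sum>k\<in>F0. \<bar>k\<bar>)"
    have sub: "F0 \<subseteq> {- int Mb..int Mb}"
    proof
      fix k assume k: "k \<in> F0"
      have "\<bar>k\<bar> \<le> (\<Sum>k\<in>F0. \<bar>k\<bar>)" by (rule member_le_sum) (use k F0 in auto)
      then show "k \<in> {- int Mb..int Mb}" unfolding Mb_def by auto
    qed
    have tail: "K - sum H {- int Mb..int Mb} \<le> \<epsilon>'"
    proof -
      have "sum H F0 \<le> sum H {- int Mb..int Mb}" by (rule sum_mono2) (use sub H0 in auto)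
      moreover have "K - sum H F0 \<le> \<epsilon>'" using F0(2) unfolding dist_real_def by linarith
      ultimately show ?thesis by linarith
    qed
    have ev1: "eventually (\<lambda>n. ell n \<ge> real Mb / \<eta> + 1) sequentially"
      using l_inf unfolding filterlim_at_top by blast
    have ev3: "eventually (\<lambda>n. ell n ^ 2 * (4 * K / real n) \<le> e / 3) sequentially"
      by (rule rate[OF l_rate eps(1)]) (use K0 e in auto)
    show "\<forall>\<^sub>F n in sequentially. \<forall>u\<in>unit_cube. \<forall>v\<in>unit_cube.
     ell n ^ 2 * \<bar>(integral\<^sup>L M (sigma_tilde \<phi> (ell n) C U n u v) - sigma_C M U u v)
        - (\<phi>'' 0 / 2) * (\<Sum>\<^sub>\<infinity>k\<in>(UNIV::int set). real_of_int k ^ 2 * gamma_cov M U k u v) / ell n ^ 2\<bar> \<le> e"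
      using ev1 ev3 eventually_ge_at_top[of 1]
    proof eventually_elim
      case (elim n)
      define l where "l = ell n"
      have l0: "l > 0" unfolding l_def by (rule l_pos)
      have Ml: "real Mb < \<eta> * l"
      proof -
        have "real Mb / \<eta> < l" using elim(1) unfolding l_def by linarith
        then show ?thesis using \<eta>(1) by (simp add: pos_divide_less_eq mult.commute)
      qed
      show ?case
      proof (intro ballI)
        fix u v :: "real^'d"
        define g where "g = (\<lambda>k. gamma_cov M U k u v)"
        have gG': "\<bar>g k\<bar> \<le> G k" for k unfolding g_def by (rule gG)
        have ES: "integral\<^sup>L M (sigma_tilde \<phi> l C U n u v)
           = (1 / real n) * (\<Sum>i\<in>{1..int n}. \<Sum>j\<in>{1..int n}. \<phi> (real_of_int (i - j) / l) * g (j - i))"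
          unfolding g_def by (rule expect_sigma[OF P meas stat cdf])
        define A where "A = integral\<^sup>L M (sigma_tilde \<phi> l C U n u v) - infsum (\<lambda>k. \<phi> (real_of_int k / l) * g k) UNIV"
        define B where "B = infsum (\<lambda>k. \<phi> (real_of_int k / l) * g k) UNIV - infsum g UNIV
            - c * infsum (\<lambda>k. (real_of_int k)^2 * g k) UNIV / l^2"
        have hA: "\<bar>A\<bar> \<le> 4 * K / real n"
          unfolding A_def ES K_def H_def
          by (rule termA) (use G0 GS HS gG' phi_range phi_sym elim(3) in auto)
        have hB: "l^2 * \<bar>B\<bar> \<le> \<delta> * K + R * \<epsilon>'"
          unfolding B_def K_def H_def
          by (rule termB) (use G0 GS HS gG' \<eta>(2) glob \<delta>0 R0 l0 Ml phi_range tail in \<open>auto simp: K_def H_def\<close>)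
        have eq: "(integral\<^sup>L M (sigma_tilde \<phi> (ell n) C U n u v) - sigma_C M U u v)
          - (\<phi>'' 0 / 2) * (\<Sum>\<^sub>\<infinity>k\<in>(UNIV::int set). real_of_int k ^ 2 * gamma_cov M U k u v) / ell n ^ 2 = A + B"
          unfolding A_def B_def sigma_C_def c_def l_def g_def by simp
        have "ell n ^ 2 * \<bar>A + B\<bar> \<le> l^2 * \<bar>A\<bar> + l^2 * \<bar>B\<bar>"
          unfolding l_def[symmetric] distrib_left[symmetric] by (intro mult_left_mono abs_triangle_ineq) auto
        also have "l^2 * \<bar>A\<bar> \<le> l^2 * (4 * K / real n)" using hA by (intro mult_left_mono) auto
        also have "l^2 * (4 * K / real n) \<le> e / 3" using elim(2) unfolding l_def .
        finally have "ell n ^ 2 * \<bar>A + B\<bar> \<le> e / 3 + l^2 * \<bar>B\<bar>" by simp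
        then show "ell n ^ 2 * \<bar>(integral\<^sup>L M (sigma_tilde \<phi> (ell n) C U n u v) - sigma_C M U u v)
          - (\<phi>'' 0 / 2) * (\<Sum>\<^sub>\<infinity>k\<in>(UNIV::int set). real_of_int k ^ 2 * gamma_cov M U k u v) / ell n ^ 2\<bar> \<le> e"
          unfolding eq using hB \<delta>K R\<epsilon> by linarith
      qed
    qed
  qed
qed


end
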